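(* Let $\mathbb{0}=\{x\in\omega^\omega : x(n)=0 \text{ for all but finitely many } n\}$ and consider $P=\omega^\omega\setminus\mathbb{0}$ ordered by $\le^*$. Then $\mathfrak{icp}(P,\le^* )=\mathfrak{b}$ and $\mathfrak{cp}(P,\le^* )=\mathfrak{d}$.
   Context: For $x,y\in\omega^\omega$, $x\le^* y$ means $x(n)\le y(n)$ for all but finitely many $n$. For a poset (or preorder) $(P,\le)$: $F\subseteq P$ is a comparable family if for every $p\in P$ there is $q\in F$ with $p\le q$ or $q\le p$; $F$ is an incomparable family if for every $p\in P$ there is $q\in F$ with $p\not\le q$ and $q\not\le p$. $\mathfrak{cp}(P,\le)$ is the minimal size of a comparable family and $\mathfrak{icp}(P,\le)$ is the minimal size of an incomparable family. $\mathfrak{b}$ and $\mathfrak{d}$ are the usual bounding and dominating numbers of $(\omega^\omega,\le^* )$. *)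

theory Defs
  imports Main
begin

definition le_star :: "(nat \<Rightarrow> nat) \<Rightarrow> (nat \<Rightarrow> nat) \<Rightarrow> bool" where
  "le_star x y \<longleftrightarrow> finite {n. \<not> x n \<le> y n}"

definition zero_ev :: "(nat \<Rightarrow> nat) set" where
  "zero_ev = {x. finite {n. x n \<noteq> 0}}"

definition Pset :: "(nat \<Rightarrow> nat) set" where
  "Pset = UNIV - zero_ev"

definition comparable_family :: "'a set \<Rightarrow> ('a \<Rightarrow> 'a \<Rightarrow> bool) \<Rightarrow> 'a set \<Rightarrow> bool" where
  "comparable_family P le F \<longleftrightarrow> F \<subseteq> P \<and> (\<forall>p\<in>P. \<exists>q\<in>F. le p q \<or> le q p)"

definition incomparable_family :: "'a set \<Rightarrow> ('a \<Rightarrow> 'a \<Rightarrow> bool) \<Rightarrow> 'a set \<Rightarrow> bool" where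
  "incomparable_family P le F \<longleftrightarrow> F \<subseteq> P \<and> (\<forall>p\<in>P. \<exists>q\<in>F. \<not> le p q \<and> \<not> le q p)"

definition unbounded_family :: "(nat \<Rightarrow> nat) set \<Rightarrow> bool" where
  "unbounded_family F \<longleftrightarrow> \<not> (\<exists>y. \<forall>x\<in>F. le_star x y)"

definition dominating_family :: "(nat \<Rightarrow> nat) set \<Rightarrow> bool" where
  "dominating_family F \<longleftrightarrow> (\<forall>x. \<exists>y\<in>F. le_star x y)"

text \<open>This says exactly
  min{|A| : Q1 A} = min{|B| : Q2 B}, including that both minima exist iff one does.\<close>
definition same_min_card :: "('a set \<Rightarrow> bool) \<Rightarrow> ('b set \<Rightarrow> bool) \<Rightarrow> bool" where
  "same_min_card Q1 Q2 \<longleftrightarrow>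
     (\<forall>A. Q1 A \<longrightarrow> (\<exists>B. Q2 B \<and> (card_of B, card_of A) \<in> ordLeq)) \<and>
     (\<forall>B. Q2 B \<longrightarrow> (\<exists>A. Q1 A \<and> (card_of A, card_of B) \<in> ordLeq))"

end

theory Submission
  imports Defs "HOL-Library.Infinite_Set"
begin

definition nx :: "(nat \<Rightarrow> nat) \<Rightarrow> nat \<Rightarrow> nat" where
  "nx q n = (LEAST m. n < m \<and> q m \<noteq> 0)"

lemma Pset_inf: "q \<in> Pset \<Longrightarrow> infinite {n. q n \<noteq> 0}"
  by (simp add: Pset_def zero_ev_def)

lemma nx_props:
  assumes "q \<in> Pset"
  shows "n < nx q n \<and> q (nx q n) \<noteq> 0"
proof -
  from Pset_inf[OF assms] obtain m where "n < m" "q m \<noteq> 0"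
    unfolding infinite_nat_iff_unbounded by blast
  then show ?thesis using LeastI[of "\<lambda>m. n < m \<and> q m \<noteq> 0" m] unfolding nx_def by blast
qed

definition maj :: "(nat \<Rightarrow> nat) \<Rightarrow> nat \<Rightarrow> nat" where
  "maj x n = n + 1 + (\<Sum>m\<le>n. x m)"

lemma maj_ge: "x n \<le> maj x n"
proof -
  have "x n \<le> (\<Sum>m\<le>n. x m)" by (rule member_le_sum) auto
  then show ?thesis unfolding maj_def by simp
qed

lemma maj_gt: "n < maj x n"
  unfolding maj_def by simp

lemma maj_pos[simp]: "maj x n \<noteq> 0"
  unfolding maj_def by simp

lemma maj_pos2[simp]: "0 < maj x n"
  unfolding maj_def by simp

lemma maj_mono: "a \<le> b \<Longrightarrow> maj x a \<le> maj x b"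
  unfolding maj_def by (intro add_mono sum_mono2) auto

lemma sum_ge: "m \<le> n \<Longrightarrow> (q::nat\<Rightarrow>nat) m \<le> (\<Sum>i\<le>n. q i)"
  by (rule member_le_sum) auto

primrec sq :: "(nat \<Rightarrow> nat) \<Rightarrow> nat \<Rightarrow> nat" where
  "sq b 0 = 0"
| "sq b (Suc k) = maj b (sq b k)"

lemma sq_smono: "strict_mono (sq b)"
  unfolding strict_mono_Suc_iff by (simp add: maj_gt)

lemma sq_ge: "k \<le> sq b k"
  using sq_smono strict_mono_imp_increasing by blast

lemma sq_less_iff: "sq b i < sq b j \<longleftrightarrow> i < j"
  using sq_smono strict_mono_less by blast

lemma sq_le_iff: "sq b i \<le> sq b j \<longleftrightarrow> i \<le> j"
  using sq_smono strict_mono_less_eq by blast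

lemma bracket: "\<exists>k. sq b k \<le> n \<and> n < sq b (Suc k)"
proof -
  have ex: "\<exists>k. n < sq b k" using sq_ge[of "Suc n" b] by (intro exI[of _ "Suc n"]) simp
  define k' where "k' = (LEAST k. n < sq b k)"
  have k1: "n < sq b k'" unfolding k'_def using ex by (rule LeastI_ex)
  have "k' \<noteq> 0" using k1 by (cases k') auto
  then obtain k where kk: "k' = Suc k" by (cases k') auto
  have "\<not> n < sq b k" using kk not_less_Least[of k "\<lambda>k. n < sq b k"] unfolding k'_def by simp
  then show ?thesis using k1 kk by (intro exI[of _ k]) simp
qed

lemma bracket_ge: "sq b k \<le> n \<Longrightarrow> n < sq b (Suc k) \<Longrightarrow> sq b N \<le> n \<Longrightarrow> N \<le> k"
proof -
  assume a: "sq b k \<le> n" "n < sq b (Suc k)" "sq b N \<le> n"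
  then have "sq b N < sq b (Suc k)" by simp
  then have "N < Suc k" using sq_less_iff by blast
  then show ?thesis by simp
qed

lemma range_above: "m \<in> range (sq b) \<Longrightarrow> sq b k < m \<Longrightarrow> sq b (Suc k) \<le> m"
proof -
  assume a: "m \<in> range (sq b)" "sq b k < m"
  then obtain j where j: "m = sq b j" by blast
  then have "k < j" using a sq_less_iff by blast
  then have "sq b (Suc k) \<le> sq b j" using sq_le_iff[of b "Suc k" j] by (simp del: sq.simps)
  then show ?thesis using j by (simp del: sq.simps)
qed

lemma range_between: "m \<in> range (sq b) \<Longrightarrow> sq b k < m \<Longrightarrow> m < sq b (Suc (Suc k)) \<Longrightarrow> m = sq b (Suc k)"
proof -
  assume a: "m \<in> range (sq b)" "sq b k < m" "m < sq b (Suc (Suc k))"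
  then obtain j where j: "m = sq b j" by blast
  then have "k < j" "j < Suc (Suc k)" using a sq_less_iff by blast+
  then have "j = Suc k" by simp
  then show ?thesis using j by simp
qed

lemma range_inf: "infinite (range (sq b))"
  using sq_smono finite_imageD strict_mono_imp_inj_on by blast

lemma inf_le_star: "\<not> le_star x y \<longleftrightarrow> (\<forall>N. \<exists>m\<ge>N. y m < x m)"
  unfolding le_star_def infinite_nat_iff_unbounded_le by (simp add: not_le)

lemma part1:
  assumes "incomparable_family Pset le_star F"
  shows "unbounded_family F"
  unfolding unbounded_family_def
proof
  assume "\<exists>y. \<forall>x\<in>F. le_star x y"
  then obtain y where y: "\<forall>x\<in>F. le_star x y" by blast
  define p where "p = (\<lambda>n. y n + 1)"
  have "p \<in> Pset" unfolding Pset_def zero_ev_def p_def by simp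
  then obtain q where q: "q \<in> F" "\<not> le_star q p" using assms unfolding incomparable_family_def by blast
  have "le_star q p" using y q(1) unfolding le_star_def p_def
    by (rule_tac finite_subset[of _ "{n. \<not> q n \<le> y n}"]) auto
  then show False using q by simp
qed

lemma part4:
  assumes "dominating_family D"
  shows "comparable_family Pset le_star ((\<lambda>x n. x n + 1) ` D)"
  unfolding comparable_family_def
proof
  show "(\<lambda>x n. x n + 1) ` D \<subseteq> Pset" unfolding Pset_def zero_ev_def by auto
  show "\<forall>p\<in>Pset. \<exists>q\<in>(\<lambda>x n. x n + 1) ` D. le_star p q \<or> le_star q p"
  proof
    fix p
    obtain x where x: "x \<in> D" "le_star p x" using assms unfolding dominating_family_def by blast
    have "le_star p (\<lambda>n. x n + 1)" using x(2) unfolding le_star_def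
      by (rule finite_subset[rotated]) auto
    then show "\<exists>q\<in>(\<lambda>x n. x n + 1) ` D. le_star p q \<or> le_star q p" using x(1) by blast
  qed
qed

definition fb :: "(nat \<Rightarrow> nat) \<Rightarrow> nat \<Rightarrow> nat" where
  "fb b m = (if m \<in> range (sq b) then maj b m else 0)"

lemma fb_P: "fb b \<in> Pset"
proof -
  have "range (sq b) \<subseteq> {n. fb b n \<noteq> 0}" unfolding fb_def by auto
  then show ?thesis using range_inf unfolding Pset_def zero_ev_def
    using finite_subset by blast
qed

lemma part2:
  assumes "unbounded_family B"
  shows "incomparable_family Pset le_star (fb ` B)"
  unfolding incomparable_family_def
proof
  show "fb ` B \<subseteq> Pset" using fb_P by auto
  show "\<forall>p\<in>Pset. \<exists>q\<in>fb ` B. \<not> le_star p q \<and> \<not> le_star q p"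
  proof
    fix p assume pP: "p \<in> Pset"
    define a2 where "a2 = (\<lambda>n. nx p (nx p n))"
    define h where "h = (\<lambda>n. n + 1 + a2 n + (\<Sum>m\<le>a2 n. p m))"
    define H where "H = (\<lambda>n. h n + (\<Sum>m\<le>h n. p m))"
    obtain b where b: "b \<in> B" "\<not> le_star b H" using assms unfolding unbounded_family_def by blast
    have bw: "\<forall>N. \<exists>n\<ge>N. H n < b n" using b(2) inf_le_star by blast
    let ?s = "sq b"
    let ?q = "fb b"
    have common: "\<exists>n k. sq b N \<le> n \<and> H n < b n \<and> ?s k \<le> n \<and> n < ?s (Suc k) \<and> N \<le> k" for N
    proof -
      obtain n where n: "n \<ge> ?s N" "H n < b n" using bw by blast
      obtain k where k: "?s k \<le> n" "n < ?s (Suc k)" using bracket by blast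
      show ?thesis using n k bracket_ge[OF k n(1)] by blast
    qed
    have i: "\<not> le_star p ?q" unfolding inf_le_star
    proof
      fix N
      obtain n k where nk: "sq b N \<le> n" "H n < b n" "?s k \<le> n" "n < ?s (Suc k)" "N \<le> k"
        using common by blast
      define a1 where "a1 = nx p n"
      have a1: "n < a1" "p a1 \<noteq> 0" using nx_props[OF pP] a1_def by auto
      have a2': "a1 < a2 n" "p (a2 n) \<noteq> 0" using nx_props[OF pP, of a1] a1_def a2_def by auto
      have "a2 n < H n" unfolding H_def h_def by simp
      also have "\<dots> < b n" by (rule nk(2))
      also have "\<dots> \<le> maj b n" by (rule maj_ge)
      also have "\<dots> \<le> maj b (?s (Suc k))" using nk(4) by (intro maj_mono) simp
      also have "\<dots> = ?s (Suc (Suc k))" by simp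
      finally have lt: "a2 n < ?s (Suc (Suc k))" .
      have "a1 \<notin> range ?s \<or> a2 n \<notin> range ?s"
      proof (rule ccontr)
        assume "\<not> ?thesis"
        then have "a1 = ?s (Suc k)" "a2 n = ?s (Suc k)"
          using range_between[of a1 b k] range_between[of "a2 n" b k] a1 a2' lt nk(3) by auto
        then show False using a2' by simp
      qed
      then show "\<exists>m\<ge>N. ?q m < p m"
      proof
        assume "a1 \<notin> range ?s"
        then show ?thesis using a1 nk sq_ge[of N b] unfolding fb_def
          by (intro exI[of _ a1]) auto
      next
        assume "a2 n \<notin> range ?s"
        then show ?thesis using a1 a2' nk sq_ge[of N b] unfolding fb_def
          by (intro exI[of _ "a2 n"]) auto
      qed
    qed
    have ii: "\<not> le_star ?q p" unfolding inf_le_star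
    proof
      fix N
      obtain n k where nk: "sq b N \<le> n" "H n < b n" "?s k \<le> n" "n < ?s (Suc k)" "N \<le> k"
        using common by blast
      show "\<exists>m\<ge>N. p m < ?q m"
      proof (cases "?s (Suc k) \<le> h n")
        case True
        have "p (?s (Suc k)) \<le> (\<Sum>m\<le>h n. p m)" using True by (rule sum_ge)
        also have "\<dots> \<le> H n" unfolding H_def by simp
        also have "\<dots> < b n" by (rule nk(2))
        also have "\<dots> \<le> maj b n" by (rule maj_ge)
        also have "\<dots> \<le> maj b (?s (Suc k))" using nk(4) by (intro maj_mono) simp
        also have "\<dots> = ?q (?s (Suc k))" unfolding fb_def using rangeI[of "sq b" "Suc k"] by (simp del: sq.simps)
        finally have "p (?s (Suc k)) < ?q (?s (Suc k))" .
        moreover have "N \<le> ?s (Suc k)" using sq_ge[of "Suc k" b] nk(5) by simp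
        ultimately show ?thesis by blast
      next
        case False
        have "n < nx p n" using nx_props[OF pP] by blast
        also have "\<dots> < a2 n" using nx_props[OF pP, of "nx p n"] a2_def by simp
        finally have "?s k \<le> a2 n" using nk(3) by simp
        then have "p (?s k) \<le> (\<Sum>m\<le>a2 n. p m)" by (rule sum_ge)
        also have "\<dots> < h n" unfolding h_def by simp
        also have "\<dots> < ?s (Suc k)" using False by simp
        also have "\<dots> = ?q (?s k)" unfolding fb_def by simp
        finally have "p (?s k) < ?q (?s k)" .
        moreover have "N \<le> ?s k" using sq_ge[of k b] nk(5) by simp
        ultimately show ?thesis by blast
      qed
    qed
    show "\<exists>q\<in>fb ` B. \<not> le_star p q \<and> \<not> le_star q p" using i ii b(1) by blast
  qed
qed



definition pp :: "(nat \<Rightarrow> nat) \<Rightarrow> nat \<Rightarrow> nat" where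
  "pp x m = (if m \<in> range (sq x) then maj x (maj x m) else 0)"

definition yq :: "(nat \<Rightarrow> nat) \<Rightarrow> nat \<Rightarrow> nat" where
  "yq q n = (\<Sum>m\<le>n. q m) + nx q (nx q n)"

lemma pp_P: "pp x \<in> Pset"
proof -
  have "range (sq x) \<subseteq> {n. pp x n \<noteq> 0}" unfolding pp_def by auto
  then show ?thesis using range_inf unfolding Pset_def zero_ev_def
    using finite_subset by blast
qed

lemma le_star_from: "(\<And>n. N \<le> n \<Longrightarrow> x n \<le> y n) \<Longrightarrow> le_star x y"
  unfolding le_star_def
  by (rule finite_subset[of _ "{..<N}"]) (auto simp: not_le, meson not_le)

lemma eventually_of_le_star: "le_star x y \<Longrightarrow> \<exists>N. \<forall>n\<ge>N. x n \<le> y n"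
proof -
  assume "le_star x y"
  then have fin: "finite {n. \<not> x n \<le> y n}" unfolding le_star_def .
  obtain N where "\<forall>n\<in>{n. \<not> x n \<le> y n}. n < N"
    using finite_nat_bounded[OF fin] by auto
  then show ?thesis by (intro exI[of _ N]) auto
qed

lemma part3:
  assumes "comparable_family Pset le_star F"
  shows "dominating_family (yq ` F)"
  unfolding dominating_family_def
proof
  fix x
  let ?s = "sq x"
  let ?p = "pp x"
  obtain q where q: "q \<in> F" "le_star ?p q \<or> le_star q ?p"
    using assms pp_P unfolding comparable_family_def by blast
  have qP: "q \<in> Pset" using q(1) assms unfolding comparable_family_def by blast
  have "le_star x (yq q)"
    using q(2)
  proof
    assume "le_star ?p q"
    then obtain N where N: "\<forall>n\<ge>N. ?p n \<le> q n" using eventually_of_le_star by blast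
    show ?thesis
    proof (rule le_star_from[of "?s N"])
      fix n assume n: "?s N \<le> n"
      obtain k where k: "?s k \<le> n" "n < ?s (Suc k)" using bracket by blast
      have kN: "N \<le> k" using bracket_ge[OF k n] .
      have "N \<le> ?s k" using sq_ge[of k x] kN by simp
      have "x n \<le> maj x n" by (rule maj_ge)
      also have "\<dots> \<le> maj x (maj x (?s k))" using k(2) by (intro maj_mono) simp
      also have "\<dots> = ?p (?s k)" unfolding pp_def by simp
      also have "\<dots> \<le> q (?s k)" using N \<open>N \<le> ?s k\<close> by blast
      also have "\<dots> \<le> (\<Sum>m\<le>n. q m)" using k(1) by (rule sum_ge)
      also have "\<dots> \<le> yq q n" unfolding yq_def by simp
      finally show "x n \<le> yq q n" .
    qed
  next
    assume "le_star q ?p"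
    then obtain N where N: "\<forall>n\<ge>N. q n \<le> ?p n" using eventually_of_le_star by blast
    have inr: "m \<in> range ?s" if "N \<le> m" "q m \<noteq> 0" for m
    proof (rule ccontr)
      assume "m \<notin> range ?s"
      then have "?p m = 0" unfolding pp_def by simp
      then show False using N that by force
    qed
    show ?thesis
    proof (rule le_star_from[of N])
      fix n assume n: "N \<le> n"
      obtain k where k: "?s k \<le> n" "n < ?s (Suc k)" using bracket by blast
      define a1 where "a1 = nx q n"
      have a1: "n < a1" "q a1 \<noteq> 0" using nx_props[OF qP] a1_def by auto
      have a2: "a1 < nx q a1" "q (nx q a1) \<noteq> 0" using nx_props[OF qP, of a1] by auto
      have r1: "a1 \<in> range ?s" using inr a1 n by simp
      have r2: "nx q a1 \<in> range ?s" using inr a1 a2 n by simp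
      have "?s (Suc k) \<le> a1" using range_above[OF r1] a1 k by simp
      then have "?s (Suc k) < nx q a1" using a2 by simp
      then have "?s (Suc (Suc k)) \<le> nx q a1" using range_above[OF r2, of "Suc k"] by blast
      have "x n \<le> maj x n" by (rule maj_ge)
      also have "\<dots> \<le> maj x (?s (Suc k))" using k(2) by (intro maj_mono) simp
      also have "\<dots> = ?s (Suc (Suc k))" by simp
      also have "\<dots> \<le> nx q a1" by fact
      also have "\<dots> \<le> yq q n" unfolding yq_def a1_def by simp
      finally show "x n \<le> yq q n" .
    qed
  qed
  then show "\<exists>y\<in>yq ` F. le_star x y" using q(1) by blast
qed

lemma image_le: "(card_of (f ` A), card_of A) \<in> ordLeq"
  by (rule card_of_image)

lemma refl_le: "(card_of A, card_of A) \<in> ordLeq"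
  by (rule card_of_mono1) simp

theorem mainTheorem1:
  shows "same_min_card (incomparable_family Pset le_star) unbounded_family
       \<and> same_min_card (comparable_family Pset le_star) dominating_family"
  unfolding same_min_card_def
proof (intro conjI allI impI)
  fix A assume h: "incomparable_family Pset le_star A"
  show "\<exists>B. unbounded_family B \<and> (card_of B, card_of A) \<in> ordLeq"
    by (rule exI[of _ A], rule conjI, rule part1[OF h], rule refl_le)
next
  fix B assume h: "unbounded_family B"
  show "\<exists>A. incomparable_family Pset le_star A \<and> (card_of A, card_of B) \<in> ordLeq"
    by (rule exI[of _ "fb ` B"], rule conjI, rule part2[OF h], rule image_le)
next
  fix A assume h: "comparable_family Pset le_star A"
  show "\<exists>B. dominating_family B \<and> (card_of B, card_of A) \<in> ordLeq"
    by (rule exI[of _ "yq ` A"], rule conjI, rule part3[OF h], rule image_le)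
next
  fix B assume h: "dominating_family B"
  show "\<exists>A. comparable_family Pset le_star A \<and> (card_of A, card_of B) \<in> ordLeq"
    by (rule exI[of _ "(\<lambda>x n. x n + 1) ` B"], rule conjI, rule part4[OF h], rule image_le)
qed

end
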